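(* Let $(X,\|\cdot\|)$ be a normed linear space over $\mathbb{R}$ or $\mathbb{C}$. Then for all $x,a\in X$, $$\langle x,a\rangle_i\ \ge\ \tfrac12\left(\|a\|^2-\|x-a\|^2\right).$$ Moreover, if $X\neq\{0\}$, the constant $\tfrac12$ cannot be replaced by a larger quantity on the set of pairs with $\|a\|>\|x-a\|$: there is no constant $C>\tfrac12$ such that $\langle x,a\rangle_i\ge C\left(\|a\|^2-\|x-a\|^2\right)$ for all $x,a\in X$ with $\|a\|>\|x-a\|$.
   Context: For a normed linear space $(X,\|\cdot\|)$, the inferior semi-inner product is defined for $x,y\in X$ by $\langle x,y\rangle_i:=\lim_{t\to 0^-}\frac{\|y+tx\|^2-\|y\|^2}{2t}$ (the limit exists by convexity of $t\mapsto\frac12\|y+tx\|^2$). *)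

theory Defs
  imports "HOL-Analysis.Analysis"
begin

text \<open>Inferior semi-inner product of a real (or complex, viewed as real) normed space:
  sip_i x y = lim_{t -> 0-} (norm (y + t x)^2 - norm y^2) / (2 t).\<close>
definition sip_i :: "'a::real_normed_vector \<Rightarrow> 'a \<Rightarrow> real" where
  "sip_i x y = Lim (at_left 0) (\<lambda>t::real. (norm (y + t *\<^sub>R x) ^ 2 - norm y ^ 2) / (2 * t))"

end

theory Submission imports Defs begin

lemma cvx_sq:
  fixes a x :: "'a::real_normed_vector"
  shows "convex_on UNIV (\<lambda>t::real. norm (a + t *\<^sub>R x) ^ 2)"
proof (rule convex_onI)
  show "convex (UNIV::real set)" by simp
next
  fix u s t :: real assume u: "0 < u" "u < 1"
  let ?A = "norm (a + s *\<^sub>R x)" and ?B = "norm (a + t *\<^sub>R x)"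
  have e: "a + ((1 - u) * s + u * t) *\<^sub>R x = (1-u) *\<^sub>R (a + s *\<^sub>R x) + u *\<^sub>R (a + t *\<^sub>R x)"
    by (simp add: algebra_simps scaleR_add_right scaleR_add_left)
  have "norm (a + ((1 - u) * s + u * t) *\<^sub>R x) \<le> (1-u) * ?A + u * ?B"
    unfolding e using u by (metis (no_types, lifting) abs_of_pos diff_gt_0_iff_gt norm_scaleR norm_triangle_ineq order_le_less)
  hence "norm (a + ((1 - u) * s + u * t) *\<^sub>R x) ^ 2 \<le> ((1-u) * ?A + u * ?B)^2"
    by (simp add: power_mono)
  also have "\<dots> \<le> (1-u) * ?A^2 + u * ?B^2"
  proof -
    have "(1-u) * ?A^2 + u * ?B^2 - ((1-u) * ?A + u * ?B)^2 = u*(1-u)*(?A-?B)^2"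
      by (simp add: power2_eq_square algebra_simps)
    moreover have "u*(1-u)*(?A-?B)^2 \<ge> 0" using u by simp
    ultimately show ?thesis by linarith
  qed
  finally have "norm (a + ((1 - u) * s + u * t) *\<^sub>R x) ^ 2 \<le> (1-u) * ?A^2 + u * ?B^2" .
  thus "norm (a + ((1 - u) *\<^sub>R s + u *\<^sub>R t) *\<^sub>R x) ^ 2 \<le> (1-u) * ?A^2 + u * ?B^2" by simp
qed

lemma part1:
  fixes a x :: "'a::real_normed_vector"
  shows "sip_i x a \<ge> 1/2 * (norm a ^ 2 - norm (x - a) ^ 2)"
proof -
  define f where "f = (\<lambda>t::real. norm (a + t *\<^sub>R x) ^ 2)"
  define \<phi> where "\<phi> = (\<lambda>t::real. (norm (a + t *\<^sub>R x) ^ 2 - norm a ^ 2) / (2 * t))"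
  have cf: "convex_on UNIV f" unfolding f_def by (rule cvx_sq)
  have phi: "\<phi> t = (f t - f 0) / (t - 0) / 2" for t
    unfolding \<phi>_def f_def by simp
  have mono: "\<phi> s \<le> \<phi> t" if "s < t" "t < 0" for s t
    using convex_on_slope_le(2)[OF cf, of s 0 t] that unfolding phi by simp
  have bd: "\<phi> t \<le> (f 1 - f 0) / 2" if "t < 0" for t
  proof -
    have "(f t - f 0) / (t - 0) \<le> f 1 - f 0"
      using convex_on_slope_le(1)[OF cf, of t 1 0] convex_on_slope_le(2)[OF cf, of t 1 0] that
      by simp
    thus ?thesis unfolding phi[of t] by (intro divide_right_mono) auto
  qed
  define L where "L = (SUP t\<in>{..<0::real}. \<phi> t)"
  have bdd: "bdd_above (\<phi> ` {..<0})" using bd by (intro bdd_aboveI2[where M="(f 1 - f 0) / 2"]) auto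
  have up: "\<phi> t \<le> L" if "t < 0" for t
    unfolding L_def using bdd that by (auto intro!: cSUP_upper)
  have lim: "(\<phi> \<longlongrightarrow> L) (at_left 0)"
  proof (rule order_tendstoI)
    fix y assume "y < L"
    then obtain t0 where t0: "t0 < 0" "y < \<phi> t0"
      unfolding L_def by (subst (asm) less_cSUP_iff[OF _ bdd]) auto
    have "eventually (\<lambda>t. t \<in> {t0<..<0}) (at_left (0::real))"
      using t0 by (intro eventually_at_left_real) auto
    thus "eventually (\<lambda>t. y < \<phi> t) (at_left 0)"
      by (rule eventually_mono) (use t0 mono in force)
  next
    fix y assume "L < y"
    have "\<forall>\<^sub>F t in at_left (0::real). t < 0" by (simp add: eventually_at_filter)
    thus "eventually (\<lambda>t. \<phi> t < y) (at_left 0)"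
      by (rule eventually_mono) (use up \<open>L < y\<close> in force)
  qed
  have "sip_i x a = L"
    unfolding sip_i_def using lim unfolding \<phi>_def
    by (intro tendsto_Lim) (auto simp: trivial_limit_at_left_real)
  moreover have "\<phi> (-1) = 1/2 * (norm a ^ 2 - norm (x - a) ^ 2)"
    unfolding \<phi>_def by (simp add: norm_minus_commute field_simps)
  ultimately show ?thesis using up[of "-1"] by simp
qed

lemma sip_scal:
  fixes v :: "'a::real_normed_vector"
  shows "sip_i (e *\<^sub>R v) v = e * norm v ^ 2"
proof -
  have eq: "\<forall>\<^sub>F t in at_left (0::real). norm v ^ 2 * (e + t * e^2 / 2) =
      (norm (v + t *\<^sub>R (e *\<^sub>R v)) ^ 2 - norm v ^ 2) / (2 * t)"
  proof -
    have "\<forall>\<^sub>F t in at_left (0::real). t \<noteq> 0" by (simp add: eventually_at_filter)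
    thus ?thesis
    proof (rule eventually_mono)
      fix t :: real assume t: "t \<noteq> 0"
      have "v + t *\<^sub>R (e *\<^sub>R v) = (1 + t * e) *\<^sub>R v" by (simp add: algebra_simps)
      hence "norm (v + t *\<^sub>R (e *\<^sub>R v)) ^ 2 = (1 + t * e)^2 * norm v ^ 2"
        by (simp add: power_mult_distrib)
      thus "norm v ^ 2 * (e + t * e^2 / 2) =
      (norm (v + t *\<^sub>R (e *\<^sub>R v)) ^ 2 - norm v ^ 2) / (2 * t)"
        using t by (simp add: field_simps power2_eq_square)
    qed
  qed
  have "((\<lambda>t::real. norm v ^ 2 * (e + t * e^2 / 2)) \<longlongrightarrow> norm v ^ 2 * (e + 0 * e^2 / 2)) (at_left 0)"
    by (intro tendsto_intros) simp_all
  hence "((\<lambda>t::real. (norm (v + t *\<^sub>R (e *\<^sub>R v)) ^ 2 - norm v ^ 2) / (2 * t)) \<longlongrightarrow> e * norm v ^ 2) (at_left 0)"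
    using tendsto_cong[OF eq] by (simp add: mult.commute)
  thus ?thesis unfolding sip_i_def
    by (intro tendsto_Lim) (auto simp: trivial_limit_at_left_real)
qed

theorem lemma2p1:
  shows "(\<forall>x a :: 'a. sip_i x a \<ge> 1/2 * (norm a ^ 2 - norm (x - a) ^ 2))
    \<and> ((\<exists>v::'a::real_normed_vector. v \<noteq> 0) \<longrightarrow>
        \<not> (\<exists>C::real. C > 1/2 \<and>
              (\<forall>x a :: 'a. norm a > norm (x - a) \<longrightarrow>
                   sip_i x a \<ge> C * (norm a ^ 2 - norm (x - a) ^ 2))))"
proof (intro conjI impI allI notI)
  fix x a :: 'a
  show "sip_i x a \<ge> 1/2 * (norm a ^ 2 - norm (x - a) ^ 2)" by (rule part1)
next
  assume "\<exists>v::'a. v \<noteq> 0"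
  then obtain v :: 'a where v: "v \<noteq> 0" by blast
  assume "\<exists>C::real. C > 1/2 \<and>
              (\<forall>x a :: 'a. norm a > norm (x - a) \<longrightarrow>
                   sip_i x a \<ge> C * (norm a ^ 2 - norm (x - a) ^ 2))"
  then obtain C where C: "C > 1/2" and H: "\<And>x a :: 'a. norm a > norm (x - a) \<Longrightarrow>
                   sip_i x a \<ge> C * (norm a ^ 2 - norm (x - a) ^ 2)" by blast
  define e where "e = 1 - 1 / (2 * C)"
  have e0: "0 < e" and e1: "e < 1" using C by (auto simp: e_def field_simps)
  have nv: "norm v > 0" using v by simp
  have d: "e *\<^sub>R v - v = (1 - e) *\<^sub>R (-v)" by (simp add: algebra_simps)
  have nd: "norm (e *\<^sub>R v - v) = (1 - e) * norm v" unfolding d using e1 by simp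
  have "norm v > norm (e *\<^sub>R v - v)" unfolding nd using e0 nv by simp
  from H[OF this] have "e * norm v ^ 2 \<ge> C * (norm v ^ 2 - ((1 - e) * norm v) ^ 2)"
    unfolding sip_scal nd .
  hence "e * norm v ^ 2 \<ge> C * e * (2 - e) * norm v ^ 2"
    by (simp add: algebra_simps power2_eq_square)
  moreover have "norm v ^ 2 > 0" using nv by simp
  ultimately have "e \<ge> C * e * (2 - e)" by (metis mult_le_cancel_right_pos)
  hence "1 \<ge> C * (2 - e)" using e0 by (simp add: mult.commute mult.left_commute)
  moreover have "C * (2 - e) = 2 * C - C + 1/2" using C by (simp add: e_def field_simps)
  ultimately show False using C by linarith
qed

end
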